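(* Assume the setting and Assumption (A) in the context, and let $f:\mathcal{X}\to\mathbb{R}^{n_{\text{out}}}$ satisfy $A(x)f(x)\le b(x)$ and $C(x)f(x)=d(x)$ for all $x\in\mathcal{X}$. Write $f(x)=\begin{bmatrix} f_1(x)\\ f_2(x)\end{bmatrix}$ with $f_1(x)\in\mathbb{R}^{n_{\text{eq}}}$, $f_2(x)\in\mathbb{R}^{n_{\text{out}}-n_{\text{eq}}}$. Then for every $f_\theta:\mathcal{X}\to\mathbb{R}^{n_{\text{out}}-n_{\text{eq}}}$ and every $x\in\mathcal{X}$, $$\|f(x)-\mathcal{P}(f_\theta)(x)\|_2\le \big(1+\|\tilde A(x)^+\|_2\,\|\tilde A(x)\|_2\big)\sqrt{1+\|C_1(x)^{-1}C_2(x)\|_2^2}\;\|f_2(x)-f_\theta(x)\|_2,$$ where for matrices $\|\cdot\|_2$ denotes the operator norm induced by the Euclidean norm.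
   Context: Setting: $\mathcal{X}\subset\mathbb{R}^{n_{\text{in}}}$; integers $n_{\text{ineq}}\ge 0$, $0\le n_{\text{eq}}\le n_{\text{out}}$; maps $A:\mathcal{X}\to\mathbb{R}^{n_{\text{ineq}}\times n_{\text{out}}}$, $b:\mathcal{X}\to\mathbb{R}^{n_{\text{ineq}}}$, $C:\mathcal{X}\to\mathbb{R}^{n_{\text{eq}}\times n_{\text{out}}}$, $d:\mathcal{X}\to\mathbb{R}^{n_{\text{eq}}}$, describing the constraints $A(x)y\le b(x)$, $C(x)y=d(x)$ on $y\in\mathbb{R}^{n_{\text{out}}}$. Write $A(x)=[A_1(x)\;A_2(x)]$ and $C(x)=[C_1(x)\;C_2(x)]$, where $A_1,C_1$ consist of the first $n_{\text{eq}}$ columns and $A_2,C_2$ of the last $n_{\text{out}}-n_{\text{eq}}$ columns. (If $n_{\text{eq}}=0$, the equality constraints, $C_1$, $C_2$, $d$ and the first block below are absent.) Assumption (A): (i) for every $x\in\mathcal{X}$ there exists $y\in\mathbb{R}^{n_{\text{out}}}$ with $A(x)y\le b(x)$ and $C(x)y=d(x)$; (ii) $C_1(x)$ is invertible for all $x\in\mathcal{X}$; (iii) $\tilde A(x):=A_2(x)-A_1(x)C_1(x)^{-1}C_2(x)\in\mathbb{R}^{n_{\text{ineq}}\times(n_{\text{out}}-n_{\text{eq}})}$ has full row rank for all $x\in\mathcal{X}$. Define $\tilde b(x):=b(x)-A_1(x)C_1(x)^{-1}d(x)$. For a full-row-rank matrix $M$, $M^+:=M^\top(MM^\top)^{-1}$.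 $\mathsf{ReLU}(v)$ is the componentwise $\max(v,0)$. HardNet-Aff: for $f_\theta:\mathcal{X}\to\mathbb{R}^{n_{\text{out}}-n_{\text{eq}}}$, define $f_\theta^*(x):=f_\theta(x)-\tilde A(x)^+\,\mathsf{ReLU}\big(\tilde A(x)f_\theta(x)-\tilde b(x)\big)$ and $$\mathcal{P}(f_\theta)(x):=\begin{bmatrix} C_1(x)^{-1}\big(d(x)-C_2(x)f_\theta^*(x)\big)\\ f_\theta^*(x)\end{bmatrix}\in\mathbb{R}^{n_{\text{out}}}.$$ *)

theory Defs
  imports "Jordan_Normal_Form.Matrix" "Jordan_Normal_Form.DL_Rank"
begin

(* Matrices/vectors are JNF 'real mat' / 'real vec' with explicit dimensions,
   so that the degenerate cases n_eq = 0 and n_ineq = 0 are covered. *)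

definition vec_le :: "real vec \<Rightarrow> real vec \<Rightarrow> bool" where
  "vec_le u v \<longleftrightarrow> dim_vec u = dim_vec v \<and> (\<forall>i < dim_vec v. u $ i \<le> v $ i)"

definition first_cols :: "nat \<Rightarrow> real mat \<Rightarrow> real mat" where
  "first_cols k M = mat (dim_row M) k (\<lambda>(i, j). M $$ (i, j))"

definition last_cols :: "nat \<Rightarrow> real mat \<Rightarrow> real mat" where
  "last_cols k M = mat (dim_row M) (dim_col M - k) (\<lambda>(i, j). M $$ (i, j + k))"

definition first_entries :: "nat \<Rightarrow> real vec \<Rightarrow> real vec" where
  "first_entries k v = vec k (\<lambda>i. v $ i)"

definition last_entries :: "nat \<Rightarrow> real vec \<Rightarrow> real vec" where
  "last_entries k v = vec (dim_vec v - k) (\<lambda>i. v $ (i + k))"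

definition mat_inv :: "real mat \<Rightarrow> real mat" where
  "mat_inv M = (SOME B. B \<in> carrier_mat (dim_row M) (dim_row M) \<and>
                        M * B = 1\<^sub>m (dim_row M) \<and> B * M = 1\<^sub>m (dim_row M))"

definition pinv :: "real mat \<Rightarrow> real mat" where
  "pinv M = transpose_mat M * mat_inv (M * transpose_mat M)"

definition full_row_rank :: "real mat \<Rightarrow> bool" where
  "full_row_rank M \<longleftrightarrow> vec_space.rank (dim_row M) M = dim_row M"

definition relu :: "real vec \<Rightarrow> real vec" where
  "relu v = map_vec (\<lambda>t. max t 0) v"

definition vnorm :: "real vec \<Rightarrow> real" where
  "vnorm v = sqrt (v \<bullet> v)"

definition opnorm :: "real mat \<Rightarrow> real" where
  "opnorm M = Sup {vnorm (M *\<^sub>v v) | v. v \<in> carrier_vec (dim_col M) \<and> vnorm v \<le> 1}"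

definition A_tilde :: "nat \<Rightarrow> real mat \<Rightarrow> real mat \<Rightarrow> real mat" where
  "A_tilde neq A C = last_cols neq A - first_cols neq A * mat_inv (first_cols neq C) * last_cols neq C"

definition b_tilde :: "nat \<Rightarrow> real mat \<Rightarrow> real vec \<Rightarrow> real mat \<Rightarrow> real vec \<Rightarrow> real vec" where
  "b_tilde neq A b C d = b - first_cols neq A *\<^sub>v (mat_inv (first_cols neq C) *\<^sub>v d)"

definition hardnet_fstar ::
  "nat \<Rightarrow> real mat \<Rightarrow> real vec \<Rightarrow> real mat \<Rightarrow> real vec \<Rightarrow> real vec \<Rightarrow> real vec" where
  "hardnet_fstar neq A b C d y =
     y - pinv (A_tilde neq A C) *\<^sub>v relu (A_tilde neq A C *\<^sub>v y - b_tilde neq A b C d)"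

(* HardNet-Aff output P(f_theta)(x), given y = f_theta(x) and the data at x *)
definition hardnet_aff ::
  "nat \<Rightarrow> real mat \<Rightarrow> real vec \<Rightarrow> real mat \<Rightarrow> real vec \<Rightarrow> real vec \<Rightarrow> real vec" where
  "hardnet_aff neq A b C d y =
     (let fs = hardnet_fstar neq A b C d y
      in (mat_inv (first_cols neq C) *\<^sub>v (d - last_cols neq C *\<^sub>v fs)) @\<^sub>v fs)"

end

theory Submission
  imports Defs "HOL-Analysis.L2_Norm"
begin

lemma vnorm_L2: "vnorm v = L2_set (\<lambda>i. v$i) {0..<dim_vec v}"
  unfolding vnorm_def L2_set_def scalar_prod_def by (simp add: power2_eq_square)

lemma vnorm_nonneg: "0 \<le> vnorm v"
  by (simp add: vnorm_L2)

lemma vnorm_sq: "(vnorm v)^2 = v \<bullet> v"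
  unfolding vnorm_def by (simp add: scalar_prod_def sum_nonneg)

lemma vnorm_triangle:
  assumes "dim_vec a = dim_vec b"
  shows "vnorm (a + b) \<le> vnorm a + vnorm b"
proof -
  have "vnorm (a + b) = L2_set (\<lambda>i. a$i + b$i) {0..<dim_vec b}"
    unfolding vnorm_L2 by (intro L2_set_cong) auto
  also have "\<dots> \<le> L2_set (\<lambda>i. a$i) {0..<dim_vec b} + L2_set (\<lambda>i. b$i) {0..<dim_vec b}"
    by (rule L2_set_triangle_ineq)
  finally show ?thesis using assms by (simp add: vnorm_L2)
qed

lemma vnorm_minus_sym:
  assumes "dim_vec a = dim_vec b"
  shows "vnorm (a - b) = vnorm (b - a)"
  unfolding vnorm_L2 using assms
  by (simp add: L2_set_def power2_commute)

lemma vnorm_append: "(vnorm (a @\<^sub>v b))^2 = (vnorm a)^2 + (vnorm b)^2"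
  unfolding vnorm_sq
  by (rule scalar_prod_append[OF carrier_vecI carrier_vecI carrier_vecI carrier_vecI]) (rule refl)+

lemma vnorm_smult: "vnorm (c \<cdot>\<^sub>v v) = \<bar>c\<bar> * vnorm v"
proof -
  have "vnorm (c \<cdot>\<^sub>v v) = L2_set (\<lambda>i. \<bar>c\<bar> * \<bar>v$i\<bar>) {0..<dim_vec v}"
    unfolding vnorm_L2 L2_set_def by (intro arg_cong[where f=sqrt] sum.cong) (auto simp: power_mult_distrib)
  also have "\<dots> = \<bar>c\<bar> * L2_set (\<lambda>i. \<bar>v$i\<bar>) {0..<dim_vec v}"
    by (rule L2_set_right_distrib[symmetric]) simp
  finally show ?thesis unfolding vnorm_L2 L2_set_def by simp
qed

lemma vnorm_zero: "vnorm v = 0 \<Longrightarrow> v = 0\<^sub>v (dim_vec v)"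
  unfolding vnorm_L2 by (auto simp: L2_set_eq_0_iff intro!: eq_vecI)

lemma vnorm_entry: "i < dim_vec v \<Longrightarrow> \<bar>v $ i\<bar> \<le> vnorm v"
proof -
  assume i: "i < dim_vec v"
  have "vnorm v = L2_set (\<lambda>i. \<bar>v$i\<bar>) {0..<dim_vec v}"
    unfolding vnorm_L2 L2_set_def by simp
  also have "\<bar>v $ i\<bar> \<le> \<dots>" by (rule member_le_L2_set) (use i in auto)
  finally show ?thesis by simp
qed

lemma mat_vec_entry_bound:
  fixes M :: "real mat"
  assumes M: "M \<in> carrier_mat r c" and v: "v \<in> carrier_vec c" and i: "i < r"
  shows "\<bar>(M *\<^sub>v v) $ i\<bar> \<le> (\<Sum>j<c. \<bar>M $$ (i,j)\<bar>) * vnorm v"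
proof -
  have i': "i < dim_row M" using M i by simp
  have "(M *\<^sub>v v) $ i = (\<Sum>j<c. M $$ (i,j) * v $ j)"
    using M v i unfolding index_mult_mat_vec[OF i'] scalar_prod_def
    by (intro sum.cong) (auto simp: lessThan_atLeast0)
  also have "\<bar>\<dots>\<bar> \<le> (\<Sum>j<c. \<bar>M $$ (i,j) * v $ j\<bar>)" by (rule sum_abs)
  also have "\<dots> \<le> (\<Sum>j<c. \<bar>M $$ (i,j)\<bar> * vnorm v)"
  proof (intro sum_mono)
    fix j assume "j \<in> {..<c}"
    then have "\<bar>v $ j\<bar> \<le> vnorm v" using v by (intro vnorm_entry) auto
    then show "\<bar>M $$ (i,j) * v $ j\<bar> \<le> \<bar>M $$ (i,j)\<bar> * vnorm v"
      unfolding abs_mult by (rule mult_left_mono) simp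
  qed
  finally show ?thesis by (simp add: sum_distrib_right)
qed

lemma mat_vec_norm_crude:
  fixes M :: "real mat"
  assumes M: "M \<in> carrier_mat r c" and v: "v \<in> carrier_vec c"
  shows "vnorm (M *\<^sub>v v) \<le> (\<Sum>i<r. \<Sum>j<c. \<bar>M $$ (i,j)\<bar>) * vnorm v"
proof -
  have "vnorm (M *\<^sub>v v) \<le> (\<Sum>i\<in>{0..<r}. \<bar>(M *\<^sub>v v) $ i\<bar>)"
    unfolding vnorm_L2 using M L2_set_le_sum_abs[of "\<lambda>i. (M *\<^sub>v v)$i" "{0..<r}"] by simp
  also have "\<dots> \<le> (\<Sum>i\<in>{0..<r}. (\<Sum>j<c. \<bar>M $$ (i,j)\<bar>) * vnorm v)"
    by (intro sum_mono mat_vec_entry_bound[OF M v]) auto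
  finally show ?thesis by (simp add: sum_distrib_right lessThan_atLeast0)
qed

lemma opnorm_upper:
  fixes M :: "real mat"
  assumes M: "M \<in> carrier_mat r c" and u: "u \<in> carrier_vec c" and u1: "vnorm u \<le> 1"
  shows "vnorm (M *\<^sub>v u) \<le> opnorm M"
proof -
  define S where "S = {vnorm (M *\<^sub>v v) | v. v \<in> carrier_vec (dim_col M) \<and> vnorm v \<le> 1}"
  define B where "B = (\<Sum>i<r. \<Sum>j<c. \<bar>M $$ (i,j)\<bar>)"
  have B0: "0 \<le> B" unfolding B_def by (intro sum_nonneg) simp
  have dc: "dim_col M = c" using M by simp
  have bdd: "bdd_above S"
  proof (rule bdd_aboveI)
    fix s assume "s \<in> S"
    then obtain w where w: "w \<in> carrier_vec c" "vnorm w \<le> 1" "s = vnorm (M *\<^sub>v w)"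
      unfolding S_def dc by blast
    have "s \<le> B * vnorm w" using mat_vec_norm_crude[OF M w(1)] w(3) B_def by simp
    also have "\<dots> \<le> B" using w(2) B0 by (simp add: mult_left_le)
    finally show "s \<le> B" .
  qed
  have opS: "opnorm M = Sup S" unfolding opnorm_def S_def by simp
  have mem: "vnorm (M *\<^sub>v u) \<in> S" using u u1 unfolding S_def dc by blast
  show ?thesis unfolding opS by (rule cSup_upper[OF mem bdd])
qed

lemma opnorm_nonneg:
  fixes M :: "real mat"
  assumes M: "M \<in> carrier_mat r c"
  shows "0 \<le> opnorm M"
proof -
  have z: "M *\<^sub>v 0\<^sub>v c = 0\<^sub>v r" using M by (intro eq_vecI) auto
  have "vnorm (0\<^sub>v c) \<le> 1" by (simp add: vnorm_def)
  then have "vnorm (M *\<^sub>v 0\<^sub>v c) \<le> opnorm M" by (intro opnorm_upper[OF M]) auto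
  then show ?thesis using vnorm_nonneg order_trans by blast
qed

lemma opnorm_bound:
  fixes M :: "real mat"
  assumes M: "M \<in> carrier_mat r c" and v: "v \<in> carrier_vec c"
  shows "vnorm (M *\<^sub>v v) \<le> opnorm M * vnorm v"
proof (cases "vnorm v = 0")
  case True
  then have "v = 0\<^sub>v c" using vnorm_zero[OF True] v by (metis carrier_vecD)
  then have "M *\<^sub>v v = 0\<^sub>v r" using M by (intro eq_vecI) auto
  then have "vnorm (M *\<^sub>v v) = 0" by (simp add: vnorm_def)
  then show ?thesis using True by simp
next
  case False
  then have pos: "vnorm v > 0" using vnorm_nonneg[of v] by simp
  define u where "u = (1 / vnorm v) \<cdot>\<^sub>v v"
  have u: "u \<in> carrier_vec c" "vnorm u \<le> 1"
    using v pos by (auto simp: u_def vnorm_smult)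
  have "M *\<^sub>v u = (1 / vnorm v) \<cdot>\<^sub>v (M *\<^sub>v v)"
    unfolding u_def by (rule mult_mat_vec[OF M v])
  then have "vnorm (M *\<^sub>v u) = vnorm (M *\<^sub>v v) / vnorm v"
    using pos by (simp add: vnorm_smult)
  then have "vnorm (M *\<^sub>v v) / vnorm v \<le> opnorm M" using opnorm_upper[OF M u] by simp
  then show ?thesis using pos by (simp add: divide_le_eq mult.commute)
qed

lemma mat_inv_props:
  fixes M :: "real mat"
  assumes M: "M \<in> carrier_mat n n"
    and ex: "\<exists>B. B \<in> carrier_mat n n \<and> M * B = 1\<^sub>m n \<and> B * M = 1\<^sub>m n"
  shows "mat_inv M \<in> carrier_mat n n \<and> M * mat_inv M = 1\<^sub>m n \<and> mat_inv M * M = 1\<^sub>m n"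
proof -
  have dr: "dim_row M = n" using M by simp
  show ?thesis unfolding mat_inv_def dr by (rule someI_ex[OF ex])
qed

lemma invertible_mat_ex:
  fixes M :: "real mat"
  assumes M: "M \<in> carrier_mat n n" and inv: "invertible_mat M"
  shows "\<exists>B. B \<in> carrier_mat n n \<and> M * B = 1\<^sub>m n \<and> B * M = 1\<^sub>m n"
proof -
  obtain B where B1: "M * B = 1\<^sub>m (dim_row M)" and B2: "B * M = 1\<^sub>m (dim_row B)"
    using inv unfolding invertible_mat_def inverts_mat_def by blast
  have c: "dim_col B = n" using arg_cong[OF B1, of dim_col] M by simp
  have r: "dim_row B = n" using arg_cong[OF B2, of dim_col] M by simp
  have Bc: "B \<in> carrier_mat n n" by (rule carrier_matI[OF r c])
  have "M * B = 1\<^sub>m n" using B1 M by simp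
  moreover have "B * M = 1\<^sub>m n" using B2 r by simp
  ultimately show ?thesis using Bc by blast
qed

lemma det_ex_inv:
  fixes M :: "real mat"
  assumes M: "M \<in> carrier_mat n n" and d: "det M \<noteq> 0"
  shows "\<exists>B. B \<in> carrier_mat n n \<and> M * B = 1\<^sub>m n \<and> B * M = 1\<^sub>m n"
proof -
  have "M \<in> Units (ring_mat TYPE(real) n ())" by (rule det_non_zero_imp_unit[OF M d])
  then obtain B where B: "B * M = 1\<^sub>m n" "B \<in> carrier_mat n n"
    unfolding Units_def ring_mat_def by auto
  have "M * B = 1\<^sub>m n" by (rule mat_mult_left_right_inverse[OF B(2) M B(1)])
  then show ?thesis using B by blast
qed

context vec_space
begin

lemma full_rank_span_cols:
  assumes M: "M \<in> carrier_mat n k" and r: "rank M = n"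
  shows "span (set (cols M)) = carrier_vec n"
proof -
  have S: "set (cols M) \<subseteq> carrier_vec n" using M cols_dim by blast
  obtain U where U: "maximal U (\<lambda>T. T \<subseteq> set (cols M) \<and> lin_indpt T)"
    using maximal_exists[of "(\<lambda>T. T \<subseteq> set (cols M) \<and> lin_indpt T)" "card (set (cols M))" "{}"]
    by (meson List.finite_set card_mono empty_iff empty_subsetI finite_lin_indpt2 rev_finite_subset)
  have cU: "card U = n" using rank_card_indpt[OF M U] r by simp
  have US: "U \<subseteq> set (cols M)" "lin_indpt U" using U unfolding maximal_def by blast+
  have fU: "finite U" using US(1) finite_subset by blast
  have UC: "U \<subseteq> carrier_vec n" using US(1) S by blast
  have "basis U" by (rule dim_li_is_basis) (use fU US UC cU dim_is_n in auto)
  then have "span U = carrier_vec n" unfolding basis_def by auto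
  moreover have "span U \<subseteq> span (set (cols M))" using span_is_monotone US(1) by metis
  moreover have "span (set (cols M)) \<subseteq> carrier_vec n" using span_closed S by blast
  ultimately show ?thesis by blast
qed

end

lemma full_rank_orth_zero:
  fixes M :: "real mat"
  assumes M: "M \<in> carrier_mat m k" and r: "vec_space.rank m M = m"
    and v: "v \<in> carrier_vec m" and z: "transpose_mat M *\<^sub>v v = 0\<^sub>v k"
  shows "v = 0\<^sub>v m"
proof -
  have S: "set (cols M) \<subseteq> carrier_vec m" using M cols_dim by blast
  have orth: "\<forall>y \<in> set (cols M). v \<bullet> y = 0"
  proof
    fix y assume "y \<in> set (cols M)"
    then obtain j where j: "j < k" "y = col M j" using M by (auto simp: cols_def)
    have "(transpose_mat M *\<^sub>v v) $ j = 0" using z j by simp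
    then have "col M j \<bullet> v = 0" using j M by simp
    then show "v \<bullet> y = 0" using j M v comm_scalar_prod[of v m y] by (simp add: col_dim)
  qed
  note sp = vec_space.full_rank_span_cols[OF M r]
  note oc = vec_space.in_orthogonal_complement_span[OF S]
  from oc have "v \<in> vec_module.orthogonal_complement m (carrier_vec m)"
    unfolding sp using v orth unfolding vec_module.orthogonal_complement_def by blast
  then have "v \<bullet> v = 0" using v unfolding vec_module.orthogonal_complement_def by blast
  then have "vnorm v = 0" by (simp add: vnorm_def)
  then show ?thesis using vnorm_zero v by (metis carrier_vecD)
qed

lemma vec_self_zero:
  fixes w :: "real vec"
  assumes "w \<bullet> w = 0" shows "w = 0\<^sub>v (dim_vec w)"
proof -
  have "vnorm w = 0" using assms by (simp add: vnorm_def)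
  then show ?thesis by (rule vnorm_zero)
qed

lemma gram_inv_ex:
  fixes M :: "real mat"
  assumes M: "M \<in> carrier_mat m k" and r: "vec_space.rank m M = m"
  shows "\<exists>B. B \<in> carrier_mat m m \<and> (M * transpose_mat M) * B = 1\<^sub>m m \<and> B * (M * transpose_mat M) = 1\<^sub>m m"
proof -
  have MT: "transpose_mat M \<in> carrier_mat k m" using M by simp
  have G: "M * transpose_mat M \<in> carrier_mat m m" using M by simp
  have "det (M * transpose_mat M) \<noteq> 0"
  proof
    assume "det (M * transpose_mat M) = 0"
    then obtain v where v: "v \<in> carrier_vec m" "v \<noteq> 0\<^sub>v m" "(M * transpose_mat M) *\<^sub>v v = 0\<^sub>v m"
      using det_0_iff_vec_prod_zero_field[OF G] by blast
    define w where "w = transpose_mat M *\<^sub>v v"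
    have w: "w \<in> carrier_vec k" using MT v unfolding w_def by simp
    have Mw: "M *\<^sub>v w = 0\<^sub>v m" using v(3) M MT v(1) unfolding w_def by simp
    have "w \<bullet> w = v \<bullet> (M *\<^sub>v w)" unfolding w_def
      by (rule transpose_vec_mult_scalar[OF M _ v(1)]) (use w w_def in simp)
    also have "\<dots> = 0" using Mw v(1) by simp
    finally have "w = 0\<^sub>v k" using vec_self_zero w by (metis carrier_vecD)
    then have "v = 0\<^sub>v m" using full_rank_orth_zero[OF M r v(1)] unfolding w_def by simp
    then show False using v(2) by simp
  qed
  then show ?thesis by (rule det_ex_inv[OF G])
qed

lemma first_cols_carrier: "M \<in> carrier_mat r n \<Longrightarrow> first_cols k M \<in> carrier_mat r k"
  unfolding first_cols_def by simp

lemma last_cols_carrier: "M \<in> carrier_mat r n \<Longrightarrow> last_cols k M \<in> carrier_mat r (n - k)"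
  unfolding last_cols_def by simp

lemma first_entries_carrier: "first_entries k v \<in> carrier_vec k"
  unfolding first_entries_def by simp

lemma last_entries_carrier: "v \<in> carrier_vec n \<Longrightarrow> last_entries k v \<in> carrier_vec (n - k)"
  unfolding last_entries_def by simp

lemma split_entries:
  assumes v: "v \<in> carrier_vec n" and k: "k \<le> n"
  shows "v = first_entries k v @\<^sub>v last_entries k v"
  using v k unfolding first_entries_def last_entries_def
  by (intro eq_vecI) auto

lemma block_mult:
  fixes M :: "real mat"
  assumes M: "M \<in> carrier_mat r n" and v: "v \<in> carrier_vec n" and k: "k \<le> n"
  shows "M *\<^sub>v v = first_cols k M *\<^sub>v first_entries k v + last_cols k M *\<^sub>v last_entries k v"
proof (rule eq_vecI)
  show "dim_vec (M *\<^sub>v v) = dim_vec (first_cols k M *\<^sub>v first_entries k v + last_cols k M *\<^sub>v last_entries k v)"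
    using M unfolding last_cols_def by simp
  fix i assume "i < dim_vec (first_cols k M *\<^sub>v first_entries k v + last_cols k M *\<^sub>v last_entries k v)"
  then have i: "i < r" using M unfolding last_cols_def by simp
  have "(M *\<^sub>v v) $ i = (\<Sum>j\<in>{0..<n}. M $$ (i,j) * v $ j)"
    using M v i by (simp add: scalar_prod_def)
  also have "\<dots> = (\<Sum>j\<in>{0..<k}. M $$ (i,j) * v $ j) + (\<Sum>j\<in>{k..<n}. M $$ (i,j) * v $ j)"
    using k by (metis le0 sum.atLeastLessThan_concat)
  also have "(\<Sum>j\<in>{k..<n}. M $$ (i,j) * v $ j) = (\<Sum>j\<in>{0..<n-k}. M $$ (i,j+k) * v $ (j+k))"
    using sum.shift_bounds_nat_ivl[of "\<lambda>j. M$$(i,j) * v$j" 0 k "n-k"] k by simp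
  also have "(\<Sum>j\<in>{0..<k}. M $$ (i,j) * v $ j) = (first_cols k M *\<^sub>v first_entries k v) $ i"
    using M i unfolding first_cols_def first_entries_def by (simp add: scalar_prod_def)
  also have "(\<Sum>j\<in>{0..<n-k}. M $$ (i,j+k) * v $ (j+k)) = (last_cols k M *\<^sub>v last_entries k v) $ i"
    using M v i unfolding last_cols_def last_entries_def by (simp add: scalar_prod_def)
  finally show "(M *\<^sub>v v) $ i = (first_cols k M *\<^sub>v first_entries k v + last_cols k M *\<^sub>v last_entries k v) $ i"
    using M i unfolding last_cols_def by simp
qed

theorem mainTheorem2:
  fixes X :: "real vec set"
    and n_in n_ineq n_eq n_out :: nat
    and A C :: "real vec \<Rightarrow> real mat"
    and b d :: "real vec \<Rightarrow> real vec"
    and f f_theta :: "real vec \<Rightarrow> real vec"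
  assumes X_dim: "X \<subseteq> carrier_vec n_in"
    and neq_le: "n_eq \<le> n_out"
    and A_dim: "\<And>x. x \<in> X \<Longrightarrow> A x \<in> carrier_mat n_ineq n_out"
    and b_dim: "\<And>x. x \<in> X \<Longrightarrow> b x \<in> carrier_vec n_ineq"
    and C_dim: "\<And>x. x \<in> X \<Longrightarrow> C x \<in> carrier_mat n_eq n_out"
    and d_dim: "\<And>x. x \<in> X \<Longrightarrow> d x \<in> carrier_vec n_eq"
    and A_i: "\<And>x. x \<in> X \<Longrightarrow> \<exists>y \<in> carrier_vec n_out.
                 vec_le (A x *\<^sub>v y) (b x) \<and> C x *\<^sub>v y = d x"
    and A_ii: "\<And>x. x \<in> X \<Longrightarrow> invertible_mat (first_cols n_eq (C x))"
    and A_iii: "\<And>x. x \<in> X \<Longrightarrow> full_row_rank (A_tilde n_eq (A x) (C x))"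
    and f_dim: "\<And>x. x \<in> X \<Longrightarrow> f x \<in> carrier_vec n_out"
    and f_ineq: "\<And>x. x \<in> X \<Longrightarrow> vec_le (A x *\<^sub>v f x) (b x)"
    and f_eq: "\<And>x. x \<in> X \<Longrightarrow> C x *\<^sub>v f x = d x"
    and ftheta_dim: "\<And>x. x \<in> X \<Longrightarrow> f_theta x \<in> carrier_vec (n_out - n_eq)"
    and x_in: "x \<in> X"
  shows "vnorm (f x - hardnet_aff n_eq (A x) (b x) (C x) (d x) (f_theta x))
    \<le> (1 + opnorm (pinv (A_tilde n_eq (A x) (C x))) * opnorm (A_tilde n_eq (A x) (C x)))
       * sqrt (1 + (opnorm (mat_inv (first_cols n_eq (C x)) * last_cols n_eq (C x)))\<^sup>2)
       * vnorm (last_entries n_eq (f x) - f_theta x)"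
proof -
  define p where "p = n_eq"
  define q where "q = n_out - n_eq"
  define m where "m = n_ineq"
  define A0 where "A0 = A x"
  define C0 where "C0 = C x"
  define b0 where "b0 = b x"
  define d0 where "d0 = d x"
  define f0 where "f0 = f x"
  define y where "y = f_theta x"
  define C1 where "C1 = first_cols p C0"
  define C2 where "C2 = last_cols p C0"
  define A1 where "A1 = first_cols p A0"
  define A2 where "A2 = last_cols p A0"
  define Ci where "Ci = mat_inv C1"
  define At where "At = A_tilde p A0 C0"
  define P where "P = pinv At"
  define bt where "bt = b_tilde p A0 b0 C0 d0"
  define r where "r = relu (At *\<^sub>v y - bt)"
  define fs where "fs = y - P *\<^sub>v r"
  define f1 where "f1 = first_entries p f0"
  define f2 where "f2 = last_entries p f0"
  define K where "K = Ci * C2"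
  have pq: "p + q = n_out" using neq_le unfolding p_def q_def by simp
  have A0c: "A0 \<in> carrier_mat m n_out" using A_dim[OF x_in] unfolding A0_def m_def .
  have C0c: "C0 \<in> carrier_mat p n_out" using C_dim[OF x_in] unfolding C0_def p_def .
  have b0c: "b0 \<in> carrier_vec m" using b_dim[OF x_in] unfolding b0_def m_def .
  have d0c: "d0 \<in> carrier_vec p" using d_dim[OF x_in] unfolding d0_def p_def .
  have f0c: "f0 \<in> carrier_vec n_out" using f_dim[OF x_in] unfolding f0_def .
  have yc: "y \<in> carrier_vec q" using ftheta_dim[OF x_in] unfolding y_def q_def .
  have C1c: "C1 \<in> carrier_mat p p" unfolding C1_def by (rule first_cols_carrier[OF C0c])
  have C2c: "C2 \<in> carrier_mat p q" unfolding C2_def q_def p_def using last_cols_carrier[OF C0c] p_def by simp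
  have A1c: "A1 \<in> carrier_mat m p" unfolding A1_def by (rule first_cols_carrier[OF A0c])
  have A2c: "A2 \<in> carrier_mat m q" unfolding A2_def q_def p_def using last_cols_carrier[OF A0c] p_def by simp
  have f1c: "f1 \<in> carrier_vec p" unfolding f1_def by (rule first_entries_carrier)
  have f2c: "f2 \<in> carrier_vec q" unfolding f2_def q_def p_def using last_entries_carrier[OF f0c] p_def by simp
  have Ciprops: "Ci \<in> carrier_mat p p \<and> C1 * Ci = 1\<^sub>m p \<and> Ci * C1 = 1\<^sub>m p"
    unfolding Ci_def using A_ii[OF x_in] C1c
    by (intro mat_inv_props[OF C1c] invertible_mat_ex[OF C1c]) (simp add: C1_def C0_def p_def)
  then have Cic: "Ci \<in> carrier_mat p p" and CiC1: "Ci * C1 = 1\<^sub>m p" by auto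
  have Kc: "K \<in> carrier_mat p q" unfolding K_def using Cic C2c by simp
  have At_eq: "At = A2 - A1 * Ci * C2"
    unfolding At_def A_tilde_def A2_def A1_def Ci_def C1_def C2_def ..
  have AC: "A1 * Ci * C2 \<in> carrier_mat m q" using A1c Cic C2c by simp
  have Atc: "At \<in> carrier_mat m q" unfolding At_eq by (rule minus_carrier_mat[OF AC])
  have rk: "vec_space.rank m At = m"
    using A_iii[OF x_in] Atc unfolding full_row_rank_def At_def A0_def C0_def p_def by simp
  have Gi: "mat_inv (At * transpose_mat At) \<in> carrier_mat m m"
    using mat_inv_props[OF _ gram_inv_ex[OF Atc rk]] Atc by simp
  have Pc: "P \<in> carrier_mat q m" unfolding P_def pinv_def using Gi Atc by simp
  have bt_eq: "bt = b0 - A1 *\<^sub>v (Ci *\<^sub>v d0)"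
    unfolding bt_def b_tilde_def A1_def Ci_def C1_def ..
  have btc: "bt \<in> carrier_vec m" unfolding bt_eq using b0c A1c Cic d0c by simp
  have rc: "r \<in> carrier_vec m" unfolding r_def relu_def using Atc yc btc by simp
  have fsc: "fs \<in> carrier_vec q" unfolding fs_def using Pc rc yc by simp
  define Hv where "Hv = (Ci *\<^sub>v (d0 - C2 *\<^sub>v fs)) @\<^sub>v fs"
  have H_eq: "hardnet_aff n_eq (A x) (b x) (C x) (d x) (f_theta x) = Hv"
    unfolding hardnet_aff_def Let_def hardnet_fstar_def fs_def r_def P_def At_def bt_def Ci_def C1_def C2_def
      p_def A0_def b0_def C0_def d0_def y_def Hv_def ..
  have f0_split: "f0 = f1 @\<^sub>v f2"
    unfolding f1_def f2_def by (rule split_entries[OF f0c]) (simp add: p_def neq_le)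
  have lhs_eq: "last_entries n_eq (f x) - f_theta x = f2 - y" unfolding f2_def p_def f0_def y_def ..
  have E1: "C1 *\<^sub>v f1 + C2 *\<^sub>v f2 = d0"
    using block_mult[OF C0c f0c, of p] f_eq[OF x_in] neq_le
    unfolding C1_def C2_def f1_def f2_def C0_def f0_def d0_def p_def by simp
  have dC: "d0 - C2 *\<^sub>v f2 = C1 *\<^sub>v f1"
    unfolding E1[symmetric] using C1c C2c f1c f2c by (intro eq_vecI) auto
  have E2: "f1 = Ci *\<^sub>v (d0 - C2 *\<^sub>v f2)"
  proof -
    have "Ci *\<^sub>v (d0 - C2 *\<^sub>v f2) = (Ci * C1) *\<^sub>v f1"
      unfolding dC using Cic C1c f1c by simp
    also have "\<dots> = f1" unfolding CiC1 using f1c by simp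
    finally show ?thesis by simp
  qed
  have AtF: "At *\<^sub>v f2 = A2 *\<^sub>v f2 - A1 *\<^sub>v (Ci *\<^sub>v (C2 *\<^sub>v f2))"
  proof -
    have "At *\<^sub>v f2 = A2 *\<^sub>v f2 - (A1 * Ci * C2) *\<^sub>v f2"
      unfolding At_eq by (rule minus_mult_distrib_mat_vec[OF A2c AC f2c])
    moreover have "(A1 * Ci * C2) *\<^sub>v f2 = A1 *\<^sub>v (Ci *\<^sub>v (C2 *\<^sub>v f2))"
    proof -
      have ACi: "A1 * Ci \<in> carrier_mat m p" using A1c Cic by simp
      have C2f: "C2 *\<^sub>v f2 \<in> carrier_vec p" using C2c f2c by simp
      show ?thesis
        using assoc_mult_mat_vec[OF ACi C2c f2c] assoc_mult_mat_vec[OF A1c Cic C2f] by simp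
    qed
    ultimately show ?thesis by simp
  qed
  have A0f: "A0 *\<^sub>v f0 = A1 *\<^sub>v f1 + A2 *\<^sub>v f2"
    using block_mult[OF A0c f0c, of p] neq_le
    unfolding A1_def A2_def f1_def f2_def p_def by simp
  have f1eq: "A1 *\<^sub>v f1 = A1 *\<^sub>v (Ci *\<^sub>v d0) - A1 *\<^sub>v (Ci *\<^sub>v (C2 *\<^sub>v f2))"
  proof -
    have "f1 = Ci *\<^sub>v d0 - Ci *\<^sub>v (C2 *\<^sub>v f2)"
      using E2 mult_minus_distrib_mat_vec[OF Cic d0c, of "C2 *\<^sub>v f2"] C2c f2c by simp
    then show ?thesis
      using mult_minus_distrib_mat_vec[OF A1c, of "Ci *\<^sub>v d0" "Ci *\<^sub>v (C2 *\<^sub>v f2)"] Cic d0c C2c f2c by simp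
  qed
  have ineq: "\<And>i. i < m \<Longrightarrow> (A0 *\<^sub>v f0) $ i \<le> b0 $ i"
    using f_ineq[OF x_in] b0c unfolding vec_le_def A0_def f0_def b0_def by auto
  have E3: "\<And>i. i < m \<Longrightarrow> (At *\<^sub>v f2) $ i \<le> bt $ i"
  proof -
    fix i assume i: "i < m"
    have a: "(At *\<^sub>v f2) $ i = (A2 *\<^sub>v f2) $ i - (A1 *\<^sub>v (Ci *\<^sub>v (C2 *\<^sub>v f2))) $ i"
      unfolding AtF using i A1c A2c by simp
    have b: "(A0 *\<^sub>v f0) $ i = (A1 *\<^sub>v f1) $ i + (A2 *\<^sub>v f2) $ i"
      unfolding A0f using i A1c A2c by simp
    have c: "(A1 *\<^sub>v f1) $ i = (A1 *\<^sub>v (Ci *\<^sub>v d0)) $ i - (A1 *\<^sub>v (Ci *\<^sub>v (C2 *\<^sub>v f2))) $ i"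
      unfolding f1eq using i A1c by simp
    have d: "bt $ i = b0 $ i - (A1 *\<^sub>v (Ci *\<^sub>v d0)) $ i"
      unfolding bt_eq using i A1c b0c by simp
    show "(At *\<^sub>v f2) $ i \<le> bt $ i" using a b c d ineq[OF i] by linarith
  qed
  have E4: "vnorm r \<le> vnorm (At *\<^sub>v (y - f2))"
  proof -
    have comp: "\<And>i. i < m \<Longrightarrow> r $ i = max ((At *\<^sub>v y) $ i - bt $ i) 0"
      unfolding r_def relu_def using Atc btc by simp
    have comp2: "\<And>i. i < m \<Longrightarrow> (At *\<^sub>v (y - f2)) $ i = (At *\<^sub>v y) $ i - (At *\<^sub>v f2) $ i"
      using mult_minus_distrib_mat_vec[OF Atc yc f2c] Atc by simp
    have "vnorm r = L2_set (\<lambda>i. r $ i) {0..<m}" unfolding vnorm_L2 using rc by simp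
    also have "\<dots> \<le> L2_set (\<lambda>i. \<bar>(At *\<^sub>v (y - f2)) $ i\<bar>) {0..<m}"
    proof (rule L2_set_mono)
      fix i assume "i \<in> {0..<m}"
      then have i: "i < m" by simp
      show "0 \<le> r $ i" using comp[OF i] by simp
      show "r $ i \<le> \<bar>(At *\<^sub>v (y - f2)) $ i\<bar>" using comp[OF i] comp2[OF i] E3[OF i] by simp
    qed
    also have "\<dots> = vnorm (At *\<^sub>v (y - f2))" unfolding vnorm_L2 L2_set_def using Atc by simp
    finally show ?thesis .
  qed
  have E5: "vnorm (f2 - fs) \<le> (1 + opnorm P * opnorm At) * vnorm (f2 - y)"
  proof -
    have eq: "f2 - fs = (f2 - y) + P *\<^sub>v r"
      unfolding fs_def using f2c yc Pc rc by (intro eq_vecI) auto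
    have "vnorm (f2 - fs) \<le> vnorm (f2 - y) + vnorm (P *\<^sub>v r)"
      unfolding eq by (rule vnorm_triangle) (use f2c yc Pc in simp)
    also have "vnorm (P *\<^sub>v r) \<le> opnorm P * vnorm r" by (rule opnorm_bound[OF Pc rc])
    also have "vnorm r \<le> opnorm At * vnorm (y - f2)"
      using E4 opnorm_bound[OF Atc, of "y - f2"] yc f2c by simp
    also have "vnorm (y - f2) = vnorm (f2 - y)" by (rule vnorm_minus_sym) (use yc f2c in simp)
    finally have "vnorm (f2 - fs) \<le> vnorm (f2 - y) + opnorm P * (opnorm At * vnorm (f2 - y))"
      using opnorm_nonneg[OF Pc] by (simp add: mult_left_mono)
    then show ?thesis by (simp add: algebra_simps)
  qed
  have E6: "f0 - Hv = (K *\<^sub>v (fs - f2)) @\<^sub>v (f2 - fs)"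
  proof -
    have Kv: "K *\<^sub>v (fs - f2) = Ci *\<^sub>v (C2 *\<^sub>v fs) - Ci *\<^sub>v (C2 *\<^sub>v f2)"
    proof -
      have "K *\<^sub>v (fs - f2) = K *\<^sub>v fs - K *\<^sub>v f2" by (rule mult_minus_distrib_mat_vec[OF Kc fsc f2c])
      then show ?thesis unfolding K_def using Cic C2c fsc f2c by simp
    qed
    have Hv1: "Ci *\<^sub>v (d0 - C2 *\<^sub>v fs) = Ci *\<^sub>v d0 - Ci *\<^sub>v (C2 *\<^sub>v fs)"
      using mult_minus_distrib_mat_vec[OF Cic d0c, of "C2 *\<^sub>v fs"] C2c fsc by simp
    have f1v: "f1 = Ci *\<^sub>v d0 - Ci *\<^sub>v (C2 *\<^sub>v f2)"
      using E2 mult_minus_distrib_mat_vec[OF Cic d0c, of "C2 *\<^sub>v f2"] C2c f2c by simp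
    have dHv: "dim_vec Hv = p + q" unfolding Hv_def using Cic fsc by simp
    show ?thesis
    proof (rule eq_vecI)
      show "dim_vec (f0 - Hv) = dim_vec (K *\<^sub>v (fs - f2) @\<^sub>v (f2 - fs))"
        using dHv Kc f2c fsc by simp
      fix i assume "i < dim_vec (K *\<^sub>v (fs - f2) @\<^sub>v (f2 - fs))"
      then have i: "i < p + q" using Kc f2c fsc by simp
      have L: "(f0 - Hv) $ i = f0 $ i - Hv $ i" using i dHv by simp
      show "(f0 - Hv) $ i = (K *\<^sub>v (fs - f2) @\<^sub>v (f2 - fs)) $ i"
      proof (cases "i < p")
        case True
        have "f0 $ i = f1 $ i" unfolding f0_split using True f1c f2c by simp
        moreover have "Hv $ i = (Ci *\<^sub>v (d0 - C2 *\<^sub>v fs)) $ i" unfolding Hv_def using True Cic fsc by simp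
        moreover have "(K *\<^sub>v (fs - f2) @\<^sub>v (f2 - fs)) $ i = (K *\<^sub>v (fs - f2)) $ i"
          using True Kc f2c by simp
        ultimately show ?thesis unfolding L Kv Hv1 f1v using True Cic by simp
      next
        case False
        have "f0 $ i = f2 $ (i - p)" unfolding f0_split using False i f1c f2c by simp
        moreover have "Hv $ i = fs $ (i - p)" unfolding Hv_def using False i Cic fsc by simp
        moreover have "(K *\<^sub>v (fs - f2) @\<^sub>v (f2 - fs)) $ i = (f2 - fs) $ (i - p)"
          using False i Kc f2c fsc by simp
        ultimately show ?thesis unfolding L using False i fsc by simp
      qed
    qed
  qed
  have E7: "vnorm (f0 - Hv) \<le> sqrt (1 + (opnorm K)^2) * vnorm (f2 - fs)"
  proof -
    have kb: "vnorm (K *\<^sub>v (fs - f2)) \<le> opnorm K * vnorm (f2 - fs)"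
      using opnorm_bound[OF Kc, of "fs - f2"] vnorm_minus_sym[of fs f2] fsc f2c by simp
    have "(vnorm (f0 - Hv))^2 = (vnorm (K *\<^sub>v (fs - f2)))^2 + (vnorm (f2 - fs))^2"
      unfolding E6 by (rule vnorm_append)
    also have "\<dots> \<le> (opnorm K * vnorm (f2 - fs))^2 + (vnorm (f2 - fs))^2"
      using kb vnorm_nonneg by (simp add: power_mono)
    also have "\<dots> = (sqrt (1 + (opnorm K)^2) * vnorm (f2 - fs))^2"
      by (simp add: power_mult_distrib algebra_simps)
    finally show ?thesis
      by (rule power2_le_imp_le) (simp add: vnorm_nonneg)
  qed
  have "vnorm (f0 - Hv)
      \<le> sqrt (1 + (opnorm K)^2) * ((1 + opnorm P * opnorm At) * vnorm (f2 - y))"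
    using E7 E5 by (meson mult_left_mono order_trans real_sqrt_ge_zero add_nonneg_nonneg zero_le_one zero_le_power2)
  then show ?thesis
    unfolding H_eq lhs_eq
    by (simp add: f0_def K_def Ci_def C1_def C2_def p_def C0_def P_def At_def A0_def mult_ac)
qed

end
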